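(* Let $m\ge 2$ and let $B$ be a blocker in $CK(2m)$ such that $e=[2m-3,2m-2]\in B$ and $f=[2m-2,2m-1]\notin B$. Then $e$ is the only edge of $B$ having $2m-2$ or $2m-1$ as an endpoint.
   Context: $CK(2m)$ denotes the complete convex geometric graph whose vertices are the $2m$ vertices of a convex polygon, labelled cyclically $0,1,\dots,2m-1$, and whose edges are all straight segments between pairs of vertices. Two edges with four distinct endpoints cross iff their endpoints alternate in the cyclic order. A simple perfect matching (SPM) is a set of $m$ edges that are pairwise disjoint (no common endpoint and no crossing). A blocking set is a set of edges containing at least one edge of every SPM. A blocker is a blocking set with exactly $m$ edges. *)

theory Defs
  imports Main
begin

text \<open>Vertices of CK(n) are 0..n-1 in cyclic order; an edge is a 2-element set of vertices.\<close>

definition ck_edges :: "nat \<Rightarrow> nat set set" where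
  "ck_edges n = {{a, b} | a b. a < b \<and> b < n}"

text \<open>Two edges cross iff their four (distinct) endpoints alternate in the cyclic order.\<close>
definition crosses :: "nat set \<Rightarrow> nat set \<Rightarrow> bool" where
  "crosses e f \<longleftrightarrow>
     (\<exists>a b c d. ((e = {a, b} \<and> f = {c, d}) \<or> (e = {c, d} \<and> f = {a, b}))
                \<and> a < c \<and> c < b \<and> b < d)"

definition disjoint_edges :: "nat set \<Rightarrow> nat set \<Rightarrow> bool" where
  "disjoint_edges e f \<longleftrightarrow> e \<inter> f = {} \<and> \<not> crosses e f"

definition is_SPM :: "nat \<Rightarrow> nat set set \<Rightarrow> bool" where
  "is_SPM m M \<longleftrightarrow> M \<subseteq> ck_edges (2 * m) \<and> card M = m \<and>
     (\<forall>e\<in>M. \<forall>f\<in>M. e \<noteq> f \<longrightarrow> disjoint_edges e f)"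

definition is_blocking_set :: "nat \<Rightarrow> nat set set \<Rightarrow> bool" where
  "is_blocking_set m B \<longleftrightarrow> B \<subseteq> ck_edges (2 * m) \<and>
     (\<forall>M. is_SPM m M \<longrightarrow> B \<inter> M \<noteq> {})"

definition is_blocker :: "nat \<Rightarrow> nat set set \<Rightarrow> bool" where
  "is_blocker m B \<longleftrightarrow> is_blocking_set m B \<and> card B = m"

end

theory Submission
  imports Defs
begin

lemma pair_eq: "a<b \<Longrightarrow> c<d \<Longrightarrow> {a,b}={c,d} \<Longrightarrow> a=c \<and> b=(d::nat)"
  by (auto simp: doubleton_eq_iff)

lemma crosses_pair:
  assumes "a<b" "c<d" "crosses {a,b} {c,(d::nat)}"
  shows "(a<c \<and> c<b \<and> b<d) \<or> (c<a \<and> a<d \<and> d<b)"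
proof -
  obtain x y z w where h: "({a,b} = {x,y} \<and> {c,d} = {z,w}) \<or> ({a,b} = {z,w} \<and> {c,d} = {x,y})"
    and o: "x < z" "z < y" "y < w"
    using assms(3) unfolding crosses_def by blast
  from h show ?thesis
  proof
    assume "{a,b} = {x,y} \<and> {c,d} = {z,w}"
    then have "a=x \<and> b=y" "c=z \<and> d=w" using pair_eq assms o by (metis order.strict_trans)+
    then show ?thesis using o by auto
  next
    assume "{a,b} = {z,w} \<and> {c,d} = {x,y}"
    then have "a=z \<and> b=w" "c=x \<and> d=y" using pair_eq assms o by (metis order.strict_trans)+
    then show ?thesis using o by auto
  qed
qed

definition PM :: "nat \<Rightarrow> nat \<Rightarrow> nat set set" where
  "PM k i = (\<lambda>a. {a, 2*i+1-a}) ` {..i} \<union> (\<lambda>a. {a, 2*i+1+2*k-a}) ` {2*i+2..<i+k+1}"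

lemma PM_edge:
  assumes "i<k" "g \<in> PM k i"
  shows "\<exists>a b. g={a,b} \<and> a<b \<and> b<2*k \<and> (a+b = 2*i+1 \<or> a+b = 2*i+1+2*k)"
  using assms unfolding PM_def
proof (elim UnE imageE)
  fix a assume "g = {a, 2*i+1-a}" "a \<in> {..i}"
  then show ?thesis using assms(1) by (intro exI[of _ a] exI[of _ "2*i+1-a"]) auto
next
  fix a assume "g = {a, 2*i+1+2*k-a}" "a \<in> {2*i+2..<i+k+1}"
  then show ?thesis using assms(1) by (intro exI[of _ a] exI[of _ "2*i+1+2*k-a"]) auto
qed

lemma PM_card:
  assumes "i<k" shows "card (PM k i) = k"
proof -
  have i1: "inj_on (\<lambda>a. {a, 2*i+1-a}) {..i}"
    by (rule inj_onI) (auto simp: doubleton_eq_iff)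
  have i2: "inj_on (\<lambda>a. {a, 2*i+1+2*k-a}) {2*i+2..<i+k+1}"
    by (rule inj_onI) (auto simp: doubleton_eq_iff)
  have d: "(\<lambda>a. {a, 2*i+1-a}) ` {..i} \<inter> (\<lambda>a. {a, 2*i+1+2*k-a}) ` {2*i+2..<i+k+1} = {}"
    using assms by (auto simp: doubleton_eq_iff)
  have "card (PM k i) = card ((\<lambda>a. {a, 2*i+1-a}) ` {..i}) + card ((\<lambda>a. {a, 2*i+1+2*k-a}) ` {2*i+2..<i+k+1})"
    unfolding PM_def by (rule card_Un_disjoint) (use d in auto)
  also have "\<dots> = (i+1) + (k - i - 1)"
    using card_image[OF i1] card_image[OF i2] by simp
  finally show ?thesis using assms by simp
qed

lemma disj_sum:
  assumes "a<b" "c<d" "b<2*k" "d<2*(k::nat)"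
    "a+b = s \<or> a+b = s+2*k" "c+d = s \<or> c+d = s+2*k" "{a,b}\<noteq>{c,d}"
  shows "disjoint_edges {a,b} {c,d}"
proof -
  have ne: "\<not>(a=c \<and> b=d)" using assms(7) by auto
  have "{a,b} \<inter> {c,d} = {}" using assms ne by auto
  moreover have "\<not> crosses {a,b} {c,d}"
  proof
    assume "crosses {a,b} {c,d}"
    from crosses_pair[OF assms(1,2) this] assms show False by auto
  qed
  ultimately show ?thesis unfolding disjoint_edges_def by simp
qed

lemma PM_SPM:
  assumes "i<k" shows "is_SPM k (PM k i)"
  unfolding is_SPM_def
proof (intro conjI ballI impI)
  show "PM k i \<subseteq> ck_edges (2*k)"
  proof
    fix g assume "g \<in> PM k i"
    from PM_edge[OF assms this] show "g \<in> ck_edges (2*k)" unfolding ck_edges_def by blast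
  qed
  show "card (PM k i) = k" using PM_card[OF assms] .
  fix e f assume "e \<in> PM k i" "f \<in> PM k i" "e \<noteq> f"
  with PM_edge[OF assms] obtain a b c d where
    "e={a,b}" "a<b" "b<2*k" "(a+b = 2*i+1 \<or> a+b = 2*i+1+2*k)"
    "f={c,d}" "c<d" "d<2*k" "(c+d = 2*i+1 \<or> c+d = 2*i+1+2*k)"
    by metis
  then show "disjoint_edges e f" using disj_sum[of a b c d k "2*i+1"] \<open>e\<noteq>f\<close> by auto
qed

lemma PM_disj:
  assumes "i<k" "j<k" "i\<noteq>j" shows "PM k i \<inter> PM k j = {}"
proof (rule ccontr)
  assume "PM k i \<inter> PM k j \<noteq> {}"
  then obtain g where g: "g \<in> PM k i" "g \<in> PM k j" by blast
  from PM_edge[OF assms(1) g(1)] obtain a b where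
    ab: "g={a,b}" "a<b" "b<2*k" "(a+b = 2*i+1 \<or> a+b = 2*i+1+2*k)" by blast
  from PM_edge[OF assms(2) g(2)] obtain c d where
    cd: "g={c,d}" "c<d" "d<2*k" "(c+d = 2*j+1 \<or> c+d = 2*j+1+2*k)" by blast
  have "a=c \<and> b=d" using pair_eq ab cd by metis
  then show False using ab cd assms by auto
qed

lemma PM_small: "i<k \<Longrightarrow> g \<in> PM k i \<Longrightarrow> x \<in> g \<Longrightarrow> x < 2*k"
  using PM_edge by fastforce

theorem corollary3p5:
  fixes m :: nat and B :: "nat set set"
  assumes "m \<ge> 2"
    and "is_blocker m B"
    and "{2*m-3, 2*m-2} \<in> B"
    and "{2*m-2, 2*m-1} \<notin> B"
  shows "\<forall>g\<in>B. (2*m-2 \<in> g \<or> 2*m-1 \<in> g) \<longrightarrow> g = {2*m-3, 2*m-2}"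
proof (intro ballI impI, rule ccontr)
  fix g assume gB: "g \<in> B" and gv: "2*m-2 \<in> g \<or> 2*m-1 \<in> g" and ge: "g \<noteq> {2*m-3, 2*m-2}"
  define k where "k = m - 1"
  define f where "f = {2*k, 2*k+1}"
  have mk: "2*m-2 = 2*k" "2*m-1 = 2*k+1" "m = k+1" using assms(1) by (auto simp: k_def)
  have fB: "f \<notin> B" using assms(4) mk by (simp add: f_def)
  have blk: "\<And>M. is_SPM m M \<Longrightarrow> B \<inter> M \<noteq> {}"
    using assms(2) unfolding is_blocker_def is_blocking_set_def by blast
  have fin: "finite B" using assms(2) assms(1) unfolding is_blocker_def
    by (metis card.infinite not_numeral_le_zero)
  have cB: "card B = m" using assms(2) unfolding is_blocker_def by simp
  have SPM: "is_SPM m (insert f (PM k i))" if ik: "i<k" for i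
  proof -
    have fn: "f \<notin> PM k i" using PM_small[OF ik, of f "2*k"] by (auto simp: f_def)
    have fe: "f \<in> ck_edges (2*m)" unfolding ck_edges_def f_def mk by auto
    have fd: "disjoint_edges f e \<and> disjoint_edges e f" if "e \<in> PM k i" for e
    proof -
      from PM_edge[OF ik that] obtain a b where ab: "e={a,b}" "a<b" "b<2*k" by blast
      have "\<not> crosses {a,b} {2*k, 2*k+1}" using crosses_pair[of a b "2*k" "2*k+1"] ab by auto
      moreover have "\<not> crosses {2*k, 2*k+1} {a,b}" using crosses_pair[of "2*k" "2*k+1" a b] ab by auto
      ultimately show ?thesis using ab unfolding disjoint_edges_def f_def by auto
    qed
    have "PM k i \<subseteq> ck_edges (2*k)" using PM_SPM[OF ik] unfolding is_SPM_def by blast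
    moreover have "ck_edges (2*k) \<subseteq> ck_edges (2*m)" unfolding ck_edges_def mk
      proof (rule subsetI)
      fix x assume "x \<in> {{a, b} |a b. a < b \<and> b < 2 * k}"
      then obtain a b where "x = {a,b}" "a<b" "b<2*k" by blast
      moreover have "b < 2*(k+1)" using \<open>b<2*k\<close> by simp
      ultimately show "x \<in> {{a, b} |a b. a < b \<and> b < 2 * (k+1)}" by blast
    qed
    moreover have "finite (PM k i)" unfolding PM_def by simp
    ultimately show ?thesis using PM_SPM[OF ik] fn fe fd mk unfolding is_SPM_def by auto
  qed
  have ex: "\<exists>h. h \<in> B \<inter> PM k i" if "i<k" for i
    using blk[OF SPM[OF that]] fB by blast
  define h where "h i = (SOME h. h \<in> B \<inter> PM k i)" for i
  have hB: "h i \<in> B \<inter> PM k i" if "i<k" for i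
    unfolding h_def using someI_ex[OF ex[OF that]] .
  have inj: "inj_on h {..<k}"
  proof (rule inj_onI)
    fix i j assume "i \<in> {..<k}" "j \<in> {..<k}" "h i = h j"
    then show "i = j" using hB PM_disj[of i k j] by (metis IntD2 disjoint_iff lessThan_iff)
  qed
  let ?e = "{2*m-3, 2*m-2}"
  have sub: "h ` {..<k} \<subseteq> B - {?e, g}"
  proof
    fix x assume "x \<in> h ` {..<k}"
    then obtain i where i: "i<k" "x = h i" by auto
    have "x \<in> B" "x \<in> PM k i" using hB[OF i(1)] i by auto
    moreover have "x \<noteq> ?e" using PM_small[OF i(1) \<open>x \<in> PM k i\<close>, of "2*m-2"] mk by auto
    moreover have "x \<noteq> g" using PM_small[OF i(1) \<open>x \<in> PM k i\<close>] gv mk by fastforce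
    ultimately show "x \<in> B - {?e, g}" by auto
  qed
  have "card (h ` {..<k}) \<le> card (B - {?e, g})" using card_mono[OF _ sub] fin by simp
  moreover have "card (B - {?e, g}) = m - 2" using assms(3) gB ge fin cB
    by (simp add: card_Diff_subset)
  moreover have "card (h ` {..<k}) = k" using card_image[OF inj] by simp
  ultimately show False using mk assms(1) by linarith
qed

end
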